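(* The Euclidean plane $\mathbb R^2$ is strongly discrete homogeneous.
   Context: A subset $D$ of $X$ is discrete if each point of $X$ has a neighbourhood containing at most one point of $D$. A Hausdorff space $X$ is strongly discrete homogeneous (sDH) if for any two discrete subsets $A,B$ of $X$ and any bijection $f\colon A\to B$, $f$ extends to a homeomorphism of $X$ onto itself. *)

theory Defs
  imports "HOL-Analysis.Analysis"
begin

definition discrete_subset :: "'a::topological_space set \<Rightarrow> bool" where
  "discrete_subset D \<longleftrightarrow>
     (\<forall>x. \<exists>U. open U \<and> x \<in> U \<and> (\<forall>a\<in>U \<inter> D. \<forall>b\<in>U \<inter> D. a = b))"

text \<open>Strongly discrete homogeneous (the space is the whole type; Hausdorffness
is imposed by the class t2_space).\<close>
definition sDH :: "'a::t2_space itself \<Rightarrow> bool" where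
  "sDH _ \<longleftrightarrow>
     (\<forall>(A::'a set) (B::'a set) f. discrete_subset A \<and> discrete_subset B \<and> bij_betw f A B \<longrightarrow>
        (\<exists>h g. homeomorphism UNIV UNIV h g \<and> (\<forall>x\<in>A. h x = f x)))"

end

theory Submission
  imports Defs
begin

definition lfs :: "'a::real_normed_vector set \<Rightarrow> bool" where
  "lfs A \<longleftrightarrow> (\<forall>M. finite {a\<in>A. norm a \<le> M})"

lemma disc_compact_finite:
  assumes "discrete_subset A" "compact K"
  shows "finite (A \<inter> K)"
proof -
  obtain U where U: "\<And>x. open (U x) \<and> x \<in> U x \<and> (\<forall>a\<in>U x \<inter> A. \<forall>b\<in>U x \<inter> A. a = b)"
    using assms(1) unfolding discrete_subset_def by metis
  have "K \<subseteq> \<Union>(U ` K)" using U by blast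
  then obtain C where C: "C \<subseteq> K" "finite C" "K \<subseteq> \<Union>(U ` C)"
    using compactE_image[OF assms(2), of K U] U by metis
  have fin: "finite (U x \<inter> A)" for x
  proof (cases "U x \<inter> A = {}")
    case False
    then obtain a where "a \<in> U x \<inter> A" by blast
    then have "U x \<inter> A = {a}" using U by blast
    then show ?thesis by simp
  qed simp
  have "A \<inter> K \<subseteq> (\<Union>x\<in>C. U x \<inter> A)" using C by blast
  moreover have "finite (\<Union>x\<in>C. U x \<inter> A)" using C fin by blast
  ultimately show ?thesis using finite_subset by blast
qed

lemma disc_lfs:
  fixes A :: "'a::{heine_borel,real_normed_vector} set"
  assumes "discrete_subset A" shows "lfs A"
  unfolding lfs_def
proof
  fix M
  have "{a\<in>A. norm a \<le> M} = A \<inter> cball 0 M" by auto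
  then show "finite {a\<in>A. norm a \<le> M}" using disc_compact_finite[OF assms compact_cball] by simp
qed

lemma lfs_nolimpt:
  assumes "lfs S" shows "\<not> x islimpt S"
proof
  assume "x islimpt S"
  then have "infinite (S \<inter> ball x 1)" by (simp add: islimpt_eq_infinite_ball)
  moreover have "S \<inter> ball x 1 \<subseteq> {s\<in>S. norm s \<le> norm x + 1}"
  proof
    fix s assume s: "s \<in> S \<inter> ball x 1"
    have "dist 0 s \<le> dist 0 x + dist x s" by (rule dist_triangle)
    then show "s \<in> {s\<in>S. norm s \<le> norm x + 1}" using s by auto
  qed
  ultimately show False using assms unfolding lfs_def by (meson finite_subset)
qed

lemma lfs_closed: "lfs S \<Longrightarrow> closed S"
  using lfs_nolimpt closed_limpt by blast

lemma lfs_discrete: "lfs S \<Longrightarrow> discrete S"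
  using lfs_nolimpt by (meson discreteI isolated_in_islimpt_iff)

lemma lfs_ext:
  fixes S :: "real set" and f :: "real \<Rightarrow> real"
  assumes "lfs S"
  obtains g where "continuous_on UNIV g" "\<And>x. x \<in> S \<Longrightarrow> g x = f x"
proof -
  have "continuous_on S f" using continuous_on_discrete lfs_discrete assms by blast
  moreover have "closedin (top_of_set UNIV) S" using lfs_closed[OF assms] by simp
  ultimately show ?thesis using Tietze_unbounded that by metis
qed

lemma lfs_countable: assumes "lfs A" shows "countable A"
proof -
  have eq: "A = (\<Union>n::nat. {a\<in>A. norm a \<le> real n})"
    using real_arch_simple by auto
  have "countable {a\<in>A. norm a \<le> real n}" for n
    using assms unfolding lfs_def by (simp add: countable_finite)
  then have "countable (\<Union>n::nat. {a\<in>A. norm a \<le> real n})"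
    by (intro countable_UN) auto
  then show ?thesis by (subst eq)
qed

lemma distinct_norms:
  fixes A :: "'a::euclidean_space set"
  assumes "countable A"
  obtains c where "inj_on (\<lambda>a. norm (a - c)) A"
proof -
  define H where "H = (\<lambda>(a::'a,b::'a). {c. (2 *\<^sub>R (a - b)) \<bullet> c = (norm a)\<^sup>2 - (norm b)\<^sup>2})"
  define P where "P = {(a,b). a \<in> A \<and> b \<in> A \<and> a \<noteq> b}"
  have "countable P" unfolding P_def
    by (rule countable_subset[of _ "A \<times> A"]) (use assms in auto)
  then have cF: "countable (H ` P)" by simp
  have "negligible S" if "S \<in> H ` P" for S
  proof -
    from that obtain a b where "a \<noteq> b" "S = H (a,b)" unfolding P_def by auto
    have "negligible {c. (2 *\<^sub>R (a - b)) \<bullet> c = (norm a)\<^sup>2 - (norm b)\<^sup>2}"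
      by (rule negligible_hyperplane) (use \<open>a \<noteq> b\<close> in simp)
    then show ?thesis using \<open>S = H (a,b)\<close> unfolding H_def by simp
  qed
  then have "negligible (\<Union>(H ` P))" using cF by blast
  then have "\<Union>(H ` P) \<noteq> UNIV" using non_negligible_UNIV by metis
  then obtain c where c: "c \<notin> \<Union>(H ` P)" by blast
  have "inj_on (\<lambda>a. norm (a - c)) A"
  proof (rule inj_onI, rule ccontr)
    fix a b assume ab: "a \<in> A" "b \<in> A" "norm (a - c) = norm (b - c)" "a \<noteq> b"
    then have "(norm (a - c))\<^sup>2 = (norm (b - c))\<^sup>2" by simp
    moreover have e: "(norm (u - c))\<^sup>2 = (norm u)\<^sup>2 - 2 * (u \<bullet> c) + (norm c)\<^sup>2" for u
      by (simp add: power2_norm_eq_inner inner_diff_left inner_diff_right inner_commute)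
    ultimately have "(2 *\<^sub>R (a - b)) \<bullet> c = (norm a)\<^sup>2 - (norm b)\<^sup>2"
      by (simp add: inner_diff_left)
    then have "c \<in> H (a,b)" unfolding H_def by simp
    moreover have "(a,b) \<in> P" using ab unfolding P_def by simp
    ultimately show False using c by blast
  qed
  then show ?thesis using that by blast
qed

definition twist :: "(real \<Rightarrow> real) \<Rightarrow> complex \<Rightarrow> complex" where
  "twist \<phi> z = z * cis (\<phi> (cmod z))"

lemma norm_twist [simp]: "cmod (twist \<phi> z) = cmod z"
  unfolding twist_def by (simp add: norm_mult)

lemma twist_inv: "twist (\<lambda>r. - \<phi> r) (twist \<phi> z) = z"
proof -
  have "twist (\<lambda>r. - \<phi> r) (twist \<phi> z) = twist \<phi> z * cis (- \<phi> (cmod z))"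
    unfolding twist_def[of "\<lambda>r. - \<phi> r"] by simp
  also have "\<dots> = z * (cis (\<phi> (cmod z)) * cis (- \<phi> (cmod z)))"
    unfolding twist_def by (simp only: mult.assoc)
  also have "\<dots> = z" by (simp only: cis_mult) simp
  finally show ?thesis .
qed

lemma cont_comp_UNIV:
  assumes "continuous_on UNIV g" "continuous_on UNIV f"
  shows "continuous_on UNIV (\<lambda>x. g (f x))"
  using continuous_on_compose[OF assms(2) continuous_on_subset[OF assms(1)]] by (simp add: o_def)

lemma cont_twist: "continuous_on UNIV \<phi> \<Longrightarrow> continuous_on UNIV (twist \<phi>)"
proof -
  assume a: "continuous_on UNIV \<phi>"
  have "continuous_on UNIV (\<lambda>z::complex. \<phi> (cmod z))"
    by (rule cont_comp_UNIV[OF a]) (intro continuous_intros)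
  then show ?thesis unfolding twist_def by (intro continuous_intros)
qed

lemma homeo_twist:
  assumes "continuous_on UNIV \<phi>"
  shows "homeomorphism UNIV UNIV (twist \<phi>) (twist (\<lambda>r. - \<phi> r))"
proof (rule homeomorphismI)
  have c2: "continuous_on UNIV (\<lambda>r. - \<phi> r)" using assms by (intro continuous_intros)
  show "continuous_on UNIV (twist \<phi>)" by (rule cont_twist[OF assms])
  show "continuous_on UNIV (twist (\<lambda>r. - \<phi> r))" by (rule cont_twist[OF c2])
  show "twist (\<lambda>r. - \<phi> r) (twist \<phi> x) = x" for x by (rule twist_inv)
  show "twist \<phi> (twist (\<lambda>r. - \<phi> r) y) = y" for y
    using twist_inv[of "\<lambda>r. - \<phi> r" y] by simp
qed simp_all

lemma homeo_vshear:
  assumes "continuous_on UNIV g"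
  shows "homeomorphism UNIV UNIV (\<lambda>z. z + \<i> * of_real (g (Re z))) (\<lambda>z. z - \<i> * of_real (g (Re z)))"
proof (rule homeomorphismI)
  have c: "continuous_on UNIV (\<lambda>z. g (Re z))"
    by (rule cont_comp_UNIV[OF assms]) (intro continuous_intros)
  show "continuous_on UNIV (\<lambda>z. z + \<i> * of_real (g (Re z)))"
    by (intro continuous_intros c)
  show "continuous_on UNIV (\<lambda>z. z - \<i> * of_real (g (Re z)))"
    by (intro continuous_intros c)
qed simp_all

lemma homeo_hshear:
  assumes "continuous_on UNIV g"
  shows "homeomorphism UNIV UNIV (\<lambda>z. z + of_real (g (Im z))) (\<lambda>z. z - of_real (g (Im z)))"
proof (rule homeomorphismI)
  have c: "continuous_on UNIV (\<lambda>z. g (Im z))"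
    by (rule cont_comp_UNIV[OF assms]) (intro continuous_intros)
  show "continuous_on UNIV (\<lambda>z. z + of_real (g (Im z)))"
    by (intro continuous_intros c)
  show "continuous_on UNIV (\<lambda>z. z - of_real (g (Im z)))"
    by (intro continuous_intros c)
qed simp_all

lemma homeo_transl: "homeomorphism UNIV UNIV (\<lambda>z::'a::real_normed_vector. z - c) (\<lambda>w. w + c)"
  by (rule homeomorphismI) (auto intro!: continuous_intros)

lemma twist_Arg: "z * cis (- Arg z) = of_real (cmod z)"
proof -
  have "z * cis (- Arg z) = of_real (cmod z) * (cis (Arg z) * cis (- Arg z))"
    by (subst (1) rcis_cmod_Arg[symmetric]) (simp add: rcis_def mult.assoc)
  also have "\<dots> = of_real (cmod z)" by (simp only: cis_mult) simp
  finally show ?thesis .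
qed

lemma std_form:
  fixes A :: "complex set"
  assumes "lfs A"
  obtains k k' where "homeomorphism UNIV UNIV k k'" "\<forall>a\<in>A. Im (k a) = 0" "lfs (k ` A)"
proof -
  obtain c where inj: "inj_on (\<lambda>a. norm (a - c)) A"
    using distinct_norms lfs_countable assms by blast
  define N where "N = (\<lambda>a. norm (a - c)) ` A"
  have nb: "norm a \<le> norm (a - c) + norm c" for a :: complex
    using norm_triangle_ineq[of "a - c" c] by simp
  have lfN: "lfs N" unfolding lfs_def
  proof
    fix M
    have "{r\<in>N. norm r \<le> M} \<subseteq> (\<lambda>a. norm (a - c)) ` {a\<in>A. norm a \<le> M + norm c}"
      unfolding N_def using nb by (force intro: order_trans)
    moreover have "finite {a\<in>A. norm a \<le> M + norm c}" using assms unfolding lfs_def by blast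
    ultimately show "finite {r\<in>N. norm r \<le> M}" using finite_subset by blast
  qed
  define \<psi> where "\<psi> r = - Arg (inv_into A (\<lambda>a. norm (a - c)) r - c)" for r
  obtain \<phi> where \<phi>c: "continuous_on UNIV \<phi>" and \<phi>e: "\<And>r. r \<in> N \<Longrightarrow> \<phi> r = \<psi> r"
    using lfs_ext[OF lfN] by metis
  define k where "k z = twist \<phi> (z - c)" for z
  define k' where "k' w = twist (\<lambda>r. - \<phi> r) w + c" for w
  have hk: "homeomorphism UNIV UNIV k k'"
    using homeomorphism_compose[OF homeo_transl homeo_twist[OF \<phi>c]]
    unfolding k_def k'_def o_def by simp
  have ka: "k a = of_real (norm (a - c))" if "a \<in> A" for a
  proof -
    have iv: "inv_into A (\<lambda>a. norm (a - c)) (norm (a - c)) = a"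
      using inv_into_f_f[OF inj that] by simp
    have "\<phi> (norm (a - c)) = - Arg (a - c)"
      using \<phi>e[of "norm (a - c)"] that unfolding N_def \<psi>_def iv by simp
    then show ?thesis unfolding k_def twist_def using twist_Arg[of "a - c"] by simp
  qed
  have "lfs (k ` A)" unfolding lfs_def
  proof
    fix M
    have "{w\<in>k ` A. norm w \<le> M} \<subseteq> k ` {a\<in>A. norm a \<le> M + norm c}"
      using nb ka by (force intro: order_trans)
    moreover have "finite {a\<in>A. norm a \<le> M + norm c}" using assms unfolding lfs_def by blast
    ultimately show "finite {w\<in>k ` A. norm w \<le> M}" using finite_subset by blast
  qed
  moreover have "\<forall>a\<in>A. Im (k a) = 0" using ka by simp
  ultimately show ?thesis using that hk by blast
qed

lemma lfs_Re:
  assumes "lfs A" "\<forall>a\<in>A. Im a = 0"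
  shows "lfs (Re ` A)"
  unfolding lfs_def
proof
  fix M
  have "{r\<in>Re ` A. norm r \<le> M} \<subseteq> Re ` {a\<in>A. norm a \<le> M}"
    using assms(2) cmod_eq_Re by force
  moreover have "finite {a\<in>A. norm a \<le> M}" using assms unfolding lfs_def by blast
  ultimately show "finite {r\<in>Re ` A. norm r \<le> M}" using finite_subset by blast
qed

lemma shear_match:
  fixes A B :: "complex set"
  assumes lA: "lfs A" and lB: "lfs B" and rA: "\<forall>a\<in>A. Im a = 0" and rB: "\<forall>b\<in>B. Im b = 0"
    and bij: "bij_betw \<sigma> A B"
  obtains h h' where "homeomorphism UNIV UNIV h h'" "\<forall>a\<in>A. h a = \<sigma> a"
proof -
  obtain g1 where g1c: "continuous_on UNIV g1"
    and g1e: "\<And>t. t \<in> Re ` A \<Longrightarrow> g1 t = Re (\<sigma> (of_real t))"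
    using lfs_ext[OF lfs_Re[OF lA rA], of "\<lambda>t. Re (\<sigma> (of_real t))"] by blast
  obtain g2 where g2c: "continuous_on UNIV g2"
    and g2e: "\<And>s. s \<in> Re ` B \<Longrightarrow> g2 s = s - Re (inv_into A \<sigma> (of_real s))"
    using lfs_ext[OF lfs_Re[OF lB rB], of "\<lambda>s. s - Re (inv_into A \<sigma> (of_real s))"] by blast
  have g3c: "continuous_on UNIV (\<lambda>x::real. - x)" by (intro continuous_intros)
  define V1 where "V1 = (\<lambda>z. z + \<i> * of_real (g1 (Re z)))"
  define V1' where "V1' = (\<lambda>z. z - \<i> * of_real (g1 (Re z)))"
  define H2 where "H2 = (\<lambda>z. z + of_real (g2 (Im z)))"
  define H2' where "H2' = (\<lambda>z. z - of_real (g2 (Im z)))"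
  define V3 where "V3 = (\<lambda>z. z + \<i> * of_real (- (Re z)))"
  define V3' where "V3' = (\<lambda>z. z - \<i> * of_real (- (Re z)))"
  have "homeomorphism UNIV UNIV (V3 \<circ> (H2 \<circ> V1)) ((V1' \<circ> H2') \<circ> V3')"
    using homeomorphism_compose[OF homeomorphism_compose[OF homeo_vshear[OF g1c] homeo_hshear[OF g2c]]
        homeo_vshear[OF g3c]]
    unfolding V1_def V1'_def H2_def H2'_def V3_def V3'_def by (simp add: o_def)
  moreover have "(V3 \<circ> (H2 \<circ> V1)) a = \<sigma> a" if a: "a \<in> A" for a
  proof -
    define t where "t = Re a"
    define s where "s = Re (\<sigma> a)"
    have at: "a = of_real t" using rA a unfolding t_def by (simp add: complex_eq_iff)
    have sB: "\<sigma> a \<in> B" using bij a by (auto simp: bij_betw_def)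
    have bs: "\<sigma> a = of_real s" using rB sB unfolding s_def by (simp add: complex_eq_iff)
    have tA: "t \<in> Re ` A" unfolding t_def using a by blast
    have sQ: "s \<in> Re ` B" unfolding s_def using sB by blast
    have e1: "g1 t = s" using g1e[OF tA] by (simp add: at[symmetric] s_def)
    have inv: "inv_into A \<sigma> (\<sigma> a) = a" using bij a by (simp add: bij_betw_def inv_into_f_f)
    have e2: "g2 s = s - t" using g2e[OF sQ] by (simp add: bs[symmetric] inv t_def)
    have v1: "V1 a = Complex t s" unfolding V1_def using e1 at by (simp add: complex_eq_iff)
    have h2: "H2 (Complex t s) = Complex s s" unfolding H2_def using e2 by (simp add: complex_eq_iff)
    have v3: "V3 (Complex s s) = \<sigma> a" unfolding V3_def using bs by (simp add: complex_eq_iff)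
    show ?thesis using v1 h2 v3 by simp
  qed
  ultimately show ?thesis using that by blast
qed

lemma main_complex:
  fixes A B :: "complex set"
  assumes lA: "lfs A" and lB: "lfs B" and bij: "bij_betw f A B"
  obtains h h' where "homeomorphism UNIV UNIV h h'" "\<forall>a\<in>A. h a = f a"
proof -
  obtain kA kA' where hA: "homeomorphism UNIV UNIV kA kA'" and rA: "\<forall>a\<in>A. Im (kA a) = 0"
    and lA': "lfs (kA ` A)" using std_form[OF lA] by blast
  obtain kB kB' where hB: "homeomorphism UNIV UNIV kB kB'" and rB: "\<forall>b\<in>B. Im (kB b) = 0"
    and lB': "lfs (kB ` B)" using std_form[OF lB] by blast
  have iA: "kA' (kA x) = x" for x using homeomorphism_apply1[OF hA] by simp
  have iB: "kB' (kB x) = x" for x using homeomorphism_apply1[OF hB] by simp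
  define \<sigma> where "\<sigma> z = kB (f (kA' z))" for z
  have \<sigma>a: "\<sigma> (kA a) = kB (f a)" for a unfolding \<sigma>_def iA by simp
  have "bij_betw \<sigma> (kA ` A) (kB ` B)"
    unfolding bij_betw_def
  proof
    show "inj_on \<sigma> (kA ` A)"
    proof (rule inj_onI)
      fix x y assume "x \<in> kA ` A" "y \<in> kA ` A" "\<sigma> x = \<sigma> y"
      then obtain a b where ab: "a \<in> A" "b \<in> A" "x = kA a" "y = kA b" "kB (f a) = kB (f b)"
        using \<sigma>a by auto
      then have "f a = f b" using iB by metis
      then have "a = b" using bij ab by (auto simp: bij_betw_def inj_on_def)
      then show "x = y" using ab by simp
    qed
    show "\<sigma> ` kA ` A = kB ` B"
      using bij \<sigma>a unfolding bij_betw_def by (auto simp: image_image)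
  qed
  moreover have "\<forall>z\<in>kA ` A. Im z = 0" "\<forall>z\<in>kB ` B. Im z = 0" using rA rB by auto
  ultimately obtain S S' where hS: "homeomorphism UNIV UNIV S S'" and eS: "\<forall>z\<in>kA ` A. S z = \<sigma> z"
    using shear_match[OF lA' lB'] by metis
  have "homeomorphism UNIV UNIV (kB' \<circ> (S \<circ> kA)) ((kA' \<circ> S') \<circ> kB)"
    by (rule homeomorphism_compose[OF homeomorphism_compose[OF hA hS] homeomorphism_symD[OF hB]])
  moreover have "\<forall>a\<in>A. (kB' \<circ> (S \<circ> kA)) a = f a" using eS \<sigma>a iB by simp
  ultimately show ?thesis using that by blast
qed

definition jc :: "real^2 \<Rightarrow> complex" where
  "jc x = Complex (x$1) (x$2)"

definition jv :: "complex \<Rightarrow> real^2" where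
  "jv z = (\<chi> i. if i = 1 then Re z else Im z)"

lemma jv_jc: "jv (jc x) = x"
  unfolding jv_def jc_def by (simp add: vec_eq_iff forall_2)

lemma jc_jv: "jc (jv z) = z"
  unfolding jv_def jc_def by (simp add: complex_eq_iff)

lemma norm_jc: "norm (jc x) = norm x"
  unfolding jc_def norm_vec_def L2_set_def by (simp add: sum_2 complex_norm)

lemma homeo_jc: "homeomorphism UNIV UNIV jc jv"
proof (rule homeomorphismI)
  show "continuous_on UNIV jc" unfolding jc_def Complex_eq
    by (intro continuous_intros)
  show "continuous_on UNIV jv" unfolding jv_def
  proof (intro continuous_on_vec_lambda)
    fix i :: 2
    show "continuous_on UNIV (\<lambda>x. if i = 1 then Re x else Im x)"
      by (cases "i = 1") (simp_all add: continuous_on_Re continuous_on_Im continuous_on_id)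
  qed
qed (auto simp: jv_jc jc_jv)

theorem mainTheorem8:
  shows "sDH TYPE(real^2)"
  unfolding sDH_def
proof (intro allI impI)
  fix A B :: "(real^2) set" and f
  assume asm: "discrete_subset A \<and> discrete_subset B \<and> bij_betw f A B"
  have lA: "lfs A" and lB: "lfs B" using asm disc_lfs by blast+
  have lfj: "lfs (jc ` X)" if "lfs X" for X
    unfolding lfs_def
  proof
    fix M
    have "{z\<in>jc ` X. norm z \<le> M} = jc ` {x\<in>X. norm x \<le> M}" by (auto simp: norm_jc)
    then show "finite {z\<in>jc ` X. norm z \<le> M}" using that unfolding lfs_def by simp
  qed
  have bj: "bij_betw (\<lambda>z. jc (f (jv z))) (jc ` A) (jc ` B)"
    unfolding bij_betw_def
  proof
    show "inj_on (\<lambda>z. jc (f (jv z))) (jc ` A)"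
    proof (rule inj_onI)
      fix x y assume "x \<in> jc ` A" "y \<in> jc ` A" "jc (f (jv x)) = jc (f (jv y))"
      then obtain a b where ab: "a \<in> A" "b \<in> A" "x = jc a" "y = jc b" "jc (f a) = jc (f b)"
        by (auto simp: jv_jc)
      then have "f a = f b" by (metis jv_jc)
      then have "a = b" using asm ab by (auto simp: bij_betw_def inj_on_def)
      then show "x = y" using ab by simp
    qed
    show "(\<lambda>z. jc (f (jv z))) ` jc ` A = jc ` B"
      using asm unfolding bij_betw_def by (auto simp: image_image jv_jc)
  qed
  obtain h h' where hh: "homeomorphism UNIV UNIV h h'" and he: "\<forall>z\<in>jc ` A. h z = jc (f (jv z))"
    using main_complex[OF lfj[OF lA] lfj[OF lB] bj] by metis
  have "homeomorphism UNIV UNIV (jv \<circ> (h \<circ> jc)) ((jv \<circ> h') \<circ> jc)"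
    by (rule homeomorphism_compose[OF homeomorphism_compose[OF homeo_jc hh] homeomorphism_symD[OF homeo_jc]])
  moreover have "\<forall>x\<in>A. (jv \<circ> (h \<circ> jc)) x = f x" using he by (simp add: jv_jc)
  ultimately show "\<exists>h g. homeomorphism UNIV UNIV h g \<and> (\<forall>x\<in>A. h x = f x)" by blast
qed

end
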